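(* Let $h$ be a fixed-point-free isometry of order $3$ of the $E_8$ root lattice. In $E_8\perp E_8$ let $M=\{(x,x):x\in E_8\}$ and $M'=\{(hx,x):x\in E_8\}$. Then $M+M'$ contains no vectors of norm $2$ (it is rootless). *)

theory Defs
  imports "HOL-Analysis.Analysis"
begin

definition E8 :: "(real^8) set" where
  "E8 = {x. ((\<forall>i. x$i \<in> \<int>) \<or> (\<forall>i. x$i - 1/2 \<in> \<int>))
            \<and> (\<exists>k::int. (\<Sum>i\<in>UNIV. x$i) = 2 * of_int k)}"

text \<open>An isometry of E8: a bijection of the lattice preserving the inner product
(such a map is automatically additive, i.e. a lattice automorphism).\<close>
definition E8_isometry :: "(real^8 \<Rightarrow> real^8) \<Rightarrow> bool" where
  "E8_isometry h \<longleftrightarrow> bij_betw h E8 E8 \<and> (\<forall>x\<in>E8. \<forall>y\<in>E8. inner (h x) (h y) = inner x y)"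

definition E8_order3 :: "(real^8 \<Rightarrow> real^8) \<Rightarrow> bool" where
  "E8_order3 h \<longleftrightarrow> (\<forall>x\<in>E8. h (h (h x)) = x) \<and> (\<exists>x\<in>E8. h x \<noteq> x)"

definition fixed_point_free :: "(real^8 \<Rightarrow> real^8) \<Rightarrow> bool" where
  "fixed_point_free h \<longleftrightarrow> (\<forall>x\<in>E8. h x = x \<longrightarrow> x = 0)"

end

theory Submission
  imports Defs
begin

lemma E8_add: assumes "x \<in> E8" "y \<in> E8" shows "x + y \<in> E8"
proof -
  from assms obtain k1 k2 :: int where k: "(\<Sum>i\<in>UNIV. x$i) = 2 * of_int k1"
     "(\<Sum>i\<in>UNIV. y$i) = 2 * of_int k2" unfolding E8_def by auto
  have s: "(\<Sum>i\<in>UNIV. (x+y)$i) = 2 * of_int (k1+k2)"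
    using k by (simp add: sum.distrib algebra_simps)
  have c: "(\<forall>i. (x+y)$i \<in> \<int>) \<or> (\<forall>i. (x+y)$i - 1/2 \<in> \<int>)"
  proof -
    from assms have "(\<forall>i. x$i \<in> \<int>) \<or> (\<forall>i. x$i - 1/2 \<in> \<int>)"
      "(\<forall>i. y$i \<in> \<int>) \<or> (\<forall>i. y$i - 1/2 \<in> \<int>)" unfolding E8_def by auto
    then show ?thesis
    proof (elim disjE)
      assume "\<forall>i. x$i \<in> \<int>" "\<forall>i. y$i \<in> \<int>" then show ?thesis by auto
    next
      assume a: "\<forall>i. x$i \<in> \<int>" "\<forall>i. y$i - 1/2 \<in> \<int>"
      have "(x+y)$i - 1/2 = x$i + (y$i - 1/2)" for i by simp
      then show ?thesis using a by (metis Ints_add)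
    next
      assume a: "\<forall>i. x$i - 1/2 \<in> \<int>" "\<forall>i. y$i \<in> \<int>"
      have "(x+y)$i - 1/2 = (x$i - 1/2) + y$i" for i by simp
      then show ?thesis using a by (metis Ints_add)
    next
      assume a: "\<forall>i. x$i - 1/2 \<in> \<int>" "\<forall>i. y$i - 1/2 \<in> \<int>"
      have "(x+y)$i = (x$i - 1/2) + (y$i - 1/2) + 1" for i by simp
      then show ?thesis using a by (metis Ints_add Ints_1)
    qed
  qed
  show ?thesis unfolding E8_def using s c by blast
qed

lemma E8_zero: "0 \<in> E8"
  unfolding E8_def by (rule CollectI, rule conjI, simp, rule exI[of _ 0], simp)

lemma E8_norm: assumes "x \<in> E8" shows "\<exists>k::int. inner x x = 2 * of_int k"
proof -
  have ip: "inner x x = (\<Sum>i\<in>UNIV. x$i * x$i)" by (simp add: inner_vec_def)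
  from assms obtain k1 :: int where k: "(\<Sum>i\<in>UNIV. x$i) = 2 * of_int k1"
    unfolding E8_def by auto
  from assms have "(\<forall>i. x$i \<in> \<int>) \<or> (\<forall>i. x$i - 1/2 \<in> \<int>)" unfolding E8_def by auto
  then show ?thesis
  proof
    assume a: "\<forall>i. x$i \<in> \<int>"
    define n where "n i = \<lfloor>x$i\<rfloor>" for i
    have xn: "x$i = of_int (n i)" for i using a n_def by (metis Ints_cases floor_of_int)
    have "of_int (\<Sum>i\<in>UNIV. n i) = (2 * of_int k1 :: real)" using k xn by simp
    then have e1: "even (\<Sum>i\<in>UNIV. n i)" by (metis dvd_triv_left of_int_eq_iff of_int_mult of_int_numeral)
    have e2: "even (\<Sum>i\<in>UNIV. n i * n i - n i)" by (rule dvd_sum) simp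
    have "(\<Sum>i\<in>UNIV. n i * n i) = (\<Sum>i\<in>UNIV. n i) + (\<Sum>i\<in>UNIV. n i * n i - n i)"
      by (simp add: sum.distrib[symmetric])
    with e1 e2 have "even (\<Sum>i\<in>UNIV. n i * n i)" by simp
    then obtain m where m: "(\<Sum>i\<in>UNIV. n i * n i) = 2 * m" by blast
    have "inner x x = of_int (\<Sum>i\<in>UNIV. n i * n i)" using ip xn by simp
    then show ?thesis using m by auto
  next
    assume a: "\<forall>i. x$i - 1/2 \<in> \<int>"
    define n where "n i = \<lfloor>x$i - 1/2\<rfloor>" for i
    have xn: "x$i = of_int (n i) + 1/2" for i using a n_def
      by (metis Ints_cases floor_of_int diff_add_cancel)
    have e2: "even (\<Sum>i\<in>UNIV. n i * n i + n i)" by (rule dvd_sum) simp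
    then obtain m where m: "(\<Sum>i\<in>UNIV. n i * n i + n i) = 2 * m" by blast
    have "inner x x = (\<Sum>i\<in>UNIV. of_int (n i * n i + n i) + 1/4)"
      using ip xn by (simp add: algebra_simps)
    also have "\<dots> = of_int (\<Sum>i\<in>UNIV. n i * n i + n i) + 2"
      by (simp add: sum.distrib)
    finally show ?thesis using m by (intro exI[of _ "m+1"]) simp
  qed
qed

theorem lemma2p6:
  fixes h :: "real^8 \<Rightarrow> real^8"
  assumes "E8_isometry h" and "E8_order3 h" and "fixed_point_free h"
  defines "M \<equiv> {(x, x) | x. x \<in> E8}"
      and "M' \<equiv> {(h x, x) | x. x \<in> E8}"
  shows "\<forall>v \<in> {m + m' | m m'. m \<in> M \<and> m' \<in> M'}. inner v v \<noteq> 2"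
proof -
  have hE: "\<And>x. x \<in> E8 \<Longrightarrow> h x \<in> E8" using assms(1) unfolding E8_isometry_def
    by (meson bij_betwE)
  have hI: "\<And>x y. x \<in> E8 \<Longrightarrow> y \<in> E8 \<Longrightarrow> inner (h x) (h y) = inner x y"
    using assms(1) unfolding E8_isometry_def by blast
  have h3: "\<And>x. x \<in> E8 \<Longrightarrow> h (h (h x)) = x" using assms(2) unfolding E8_order3_def by blast
  have fp: "\<And>x. x \<in> E8 \<Longrightarrow> h x = x \<Longrightarrow> x = 0" using assms(3) unfolding fixed_point_free_def by blast
  have hadd: "h (a + b) = h a + h b" if a: "a \<in> E8" and b: "b \<in> E8" for a b
  proof -
    have s: "a + b \<in> E8" using a b E8_add by blast
    let ?d = "h (a+b) - h a - h b"
    have "inner ?d ?d = inner (h (a+b)) (h (a+b)) + inner (h a) (h a) + inner (h b) (h b)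
       - 2 * inner (h (a+b)) (h a) - 2 * inner (h (a+b)) (h b) + 2 * inner (h a) (h b)"
      by (simp add: inner_diff_left inner_diff_right inner_commute algebra_simps)
    also have "\<dots> = inner (a+b) (a+b) + inner a a + inner b b
       - 2 * inner (a+b) a - 2 * inner (a+b) b + 2 * inner a b"
      using hI a b s by simp
    also have "\<dots> = 0" by (simp add: inner_add_left inner_add_right inner_commute algebra_simps)
    finally have "h (a+b) - h a = h b" by simp
    then show ?thesis by (simp add: algebra_simps)
  qed
  have key: "inner (z - h z) (z - h z) \<noteq> 2" if z: "z \<in> E8" for z
  proof
    assume eq: "inner (z - h z) (z - h z) = 2"
    have z1: "h z \<in> E8" and z2: "h (h z) \<in> E8" using z hE by auto
    have w: "z + h z + h (h z) \<in> E8" using z z1 z2 E8_add by blast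
    have "h (z + h z + h (h z)) = h z + h (h z) + z"
      using hadd z z1 z2 h3 E8_add by simp
    then have "h (z + h z + h (h z)) = z + h z + h (h z)" by (simp add: algebra_simps)
    then have w0: "z + h z + h (h z) = 0" using fp w by blast
    have "h (h z) = (z + h z + h (h z)) - z - h z" by simp
    then have hh: "h (h z) = - z - h z" using w0 by simp
    have "inner (h z) (h (h (h z))) = inner z (h (h z))" using hI z z2 by blast
    then have "inner (h z) z = inner z (h (h z))" using h3[OF z] by (simp only:)
    then have "inner (h z) z = inner z (- z - h z)" using hh by (simp only:)
    then have i1: "2 * inner z (h z) = - inner z z"
      by (simp add: inner_diff_right inner_commute)
    have i2: "inner (h z) (h z) = inner z z" using hI z by blast
    have "inner (z - h z) (z - h z) = inner z z + inner (h z) (h z) - 2 * inner z (h z)"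
      by (simp add: inner_diff_left inner_diff_right inner_commute)
    then have "inner (z - h z) (z - h z) = 3 * inner z z" using i1 i2 by simp
    moreover obtain k :: int where "inner z z = 2 * of_int k" using E8_norm z by blast
    ultimately have "real_of_int (6 * k) = 2" using eq by simp
    then have "6 * k = 2" by linarith
    then show False by presburger
  qed
  show ?thesis
  proof (intro ballI notI)
    fix v assume "v \<in> {m + m' | m m'. m \<in> M \<and> m' \<in> M'}" and v2: "inner v v = 2"
    then obtain x y where x: "x \<in> E8" and y: "y \<in> E8" and v: "v = (x + h y, x + y)"
      unfolding M_def M'_def by auto
    have aE: "x + h y \<in> E8" and bE: "x + y \<in> E8" using x y hE E8_add by auto
    obtain k1 :: int where k1: "inner (x + h y) (x + h y) = 2 * of_int k1" using E8_norm aE by blast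
    obtain k2 :: int where k2: "inner (x + y) (x + y) = 2 * of_int k2" using E8_norm bE by blast
    have vv: "inner v v = inner (x + h y) (x + h y) + inner (x + y) (x + y)" using v by simp
    then have sum: "real_of_int (k1 + k2) = 1" using v2 k1 k2 by simp
    have "0 \<le> real_of_int k1" using k1 inner_ge_zero[of "x + h y"] by linarith
    moreover have "0 \<le> real_of_int k2" using k2 inner_ge_zero[of "x + y"] by linarith
    ultimately have "k1 = 0 \<or> k2 = 0" using sum by linarith
    then show False
    proof
      assume "k1 = 0"
      then have "x + h y = 0" using k1 by simp
      then have "x = - h y" by (simp add: eq_neg_iff_add_eq_0)
      then have "x + y = y - h y" by simp
      then have "inner (y - h y) (y - h y) = 2" using \<open>x + h y = 0\<close> vv v2 by simp
      then show False using key y by blast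
    next
      assume "k2 = 0"
      then have "x + y = 0" using k2 by simp
      then have h0: "h x + h y = h 0" using hadd[OF x y] by simp
      have "h 0 = 0" using hadd[OF E8_zero E8_zero] by simp
      then have "h y = - h x" using h0 by (simp add: eq_neg_iff_add_eq_0 add.commute)
      then have "x + h y = x - h x" by simp
      then have "inner (x - h x) (x - h x) = 2" using \<open>x + y = 0\<close> vv v2 by simp
      then show False using key x by blast
    qed
  qed
qed

end
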